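(* Consider the model below with $M=M_f=N=1$ and $\epsilon_2\ge0$, and let $\bar{\epsilon}_{RPE}\in[-\infty,\infty)$ be the number such that a restricted perceptions equilibrium (RPE) exists if and only if $\epsilon_1\ge\bar{\epsilon}_{RPE}$. If $\epsilon_1>\bar{\epsilon}_{RPE}$, then (i) there is exactly one E-stable RPE, and (ii) it is of type PP or of type ZP.
   Context: Parameters: $0<\beta<1$, $\sigma,\lambda,\mu>0$, $\psi>1$, $p,q\in(0,1]$ with $(p,q)\neq(1,1)$. The shock $\epsilon_t$ is a two-state Markov chain on $\{\epsilon_1,\epsilon_2\}$ with $\Pr(\epsilon_{t+1}=\epsilon_1\mid\epsilon_t=\epsilon_1)=p$, $\Pr(\epsilon_{t+1}=\epsilon_2\mid\epsilon_t=\epsilon_2)=q$; $\bar q:=(1-p)/(2-p-q)$. Model: $x_t=\hat E_t x_{t+1}-\sigma(i_t-\hat E_t\pi_{t+1})+\epsilon_t$, $\pi_t=\lambda x_t+\beta\hat E_t\pi_{t+1}$, $i_t=\max\{\psi\pi_t,-\mu\}$. An RPE is a pair $Y_j=(x_j,\pi_j)$, $j=1,2$, such that with $\bar Y=(\bar x,\bar\pi):=\bar qY_2+(1-\bar q)Y_1$ and $i_j=\max\{\psi\pi_j,-\mu\}$: $x_j=\bar x-\sigma(i_j-\bar\pi)+\epsilon_j$, $\pi_j=\lambda x_j+\beta\bar\pi$ for $j=1,2$. Types: the ZLB binds in state $j$ if $\psi\pi_j\le-\mu$; type PP (binds in no state), ZP (state 1 only), PZ (state 2 only), ZZ (both). Let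 $A_P=\frac{1}{1+\lambda\sigma\psi}\begin{pmatrix}1&\sigma-\beta\sigma\psi\\ \lambda&\beta+\lambda\sigma\end{pmatrix}$, $A_Z=\begin{pmatrix}1&\sigma\\ \lambda&\beta+\lambda\sigma\end{pmatrix}$, $I$ the $2\times2$ identity, and $DT^{PP}=A_P-I$, $DT^{ZP}=\bar qA_P+(1-\bar q)A_Z-I$, $DT^{PZ}=(1-\bar q)A_P+\bar qA_Z-I$, $DT^{ZZ}=A_Z-I$. An RPE of type $i$ is E-stable if all eigenvalues of $DT^i$ have negative real parts. *)

theory Defs
  imports "HOL-Analysis.Analysis"
begin

text \<open>Two-state New Keynesian model with ZLB (normalisation M = M_f = N = 1 already built in).
  Parameters: beta, sig, lam (= lambda), mu, psi, transition probabilities p q, shocks e1 e2.\<close>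

definition qbar :: "real \<Rightarrow> real \<Rightarrow> real" where
  "qbar p q = (1 - p) / (2 - p - q)"

definition is_RPE ::
  "real \<Rightarrow> real \<Rightarrow> real \<Rightarrow> real \<Rightarrow> real \<Rightarrow> real \<Rightarrow> real \<Rightarrow> real \<Rightarrow> real \<Rightarrow>
   (real \<times> real) \<Rightarrow> (real \<times> real) \<Rightarrow> bool" where
  "is_RPE beta sig lam mu psi p q e1 e2 Y1 Y2 =
    (let qb = qbar p q;
         x1 = fst Y1; pi1 = snd Y1; x2 = fst Y2; pi2 = snd Y2;
         xbar = qb * x2 + (1 - qb) * x1;
         pibar = qb * pi2 + (1 - qb) * pi1;
         i1 = max (psi * pi1) (- mu);
         i2 = max (psi * pi2) (- mu)
     in x1 = xbar - sig * (i1 - pibar) + e1 \<and> pi1 = lam * x1 + beta * pibar \<and>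
        x2 = xbar - sig * (i2 - pibar) + e2 \<and> pi2 = lam * x2 + beta * pibar)"

datatype rpe_type = PP | ZP | PZ | ZZ

definition zlb_binds :: "real \<Rightarrow> real \<Rightarrow> real \<Rightarrow> bool" where
  "zlb_binds mu psi pi_j = (psi * pi_j \<le> - mu)"

definition type_of_RPE :: "real \<Rightarrow> real \<Rightarrow> (real \<times> real) \<Rightarrow> (real \<times> real) \<Rightarrow> rpe_type" where
  "type_of_RPE mu psi Y1 Y2 =
    (if zlb_binds mu psi (snd Y1)
     then (if zlb_binds mu psi (snd Y2) then ZZ else ZP)
     else (if zlb_binds mu psi (snd Y2) then PZ else PP))"

definition mat2 :: "real \<Rightarrow> real \<Rightarrow> real \<Rightarrow> real \<Rightarrow> real^2^2" where
  "mat2 a b c d = vector [vector [a, b], vector [c, d]]"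

definition A_P :: "real \<Rightarrow> real \<Rightarrow> real \<Rightarrow> real \<Rightarrow> real^2^2" where
  "A_P beta sig lam psi =
     (1 / (1 + lam * sig * psi)) *\<^sub>R mat2 1 (sig - beta * sig * psi) lam (beta + lam * sig)"

definition A_Z :: "real \<Rightarrow> real \<Rightarrow> real \<Rightarrow> real^2^2" where
  "A_Z beta sig lam = mat2 1 sig lam (beta + lam * sig)"

definition DT :: "rpe_type \<Rightarrow> real \<Rightarrow> real \<Rightarrow> real \<Rightarrow> real \<Rightarrow> real \<Rightarrow> real \<Rightarrow> real^2^2" where
  "DT t beta sig lam psi p q =
    (let qb = qbar p q; AP = A_P beta sig lam psi; AZ = A_Z beta sig lam in
     case t of
       PP \<Rightarrow> AP - mat 1
     | ZP \<Rightarrow> qb *\<^sub>R AP + (1 - qb) *\<^sub>R AZ - mat 1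
     | PZ \<Rightarrow> (1 - qb) *\<^sub>R AP + qb *\<^sub>R AZ - mat 1
     | ZZ \<Rightarrow> AZ - mat 1)"

definition cmat :: "real^2^2 \<Rightarrow> complex^2^2" where
  "cmat A = (\<chi> i j. complex_of_real (A $ i $ j))"

definition is_eigenvalue :: "real^2^2 \<Rightarrow> complex \<Rightarrow> bool" where
  "is_eigenvalue A z = (det (mat z - cmat A) = 0)"

definition E_stable ::
  "real \<Rightarrow> real \<Rightarrow> real \<Rightarrow> real \<Rightarrow> real \<Rightarrow> real \<Rightarrow> real \<Rightarrow>
   (real \<times> real) \<Rightarrow> (real \<times> real) \<Rightarrow> bool" where
  "E_stable beta sig lam mu psi p q Y1 Y2 =
    (\<forall>z. is_eigenvalue (DT (type_of_RPE mu psi Y1 Y2) beta sig lam psi p q) z \<longrightarrow> Re z < 0)"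

end

theory Submission
  imports Defs
begin

lemma eig2: "is_eigenvalue M z \<longleftrightarrow>
  (z - complex_of_real (M$1$1)) * (z - complex_of_real (M$2$2)) - complex_of_real (M$1$2) * complex_of_real (M$2$1) = 0"
  unfolding is_eigenvalue_def det_2 cmat_def mat_def by (simp add: algebra_simps)

lemma quad_pos:
  fixes a b c d :: real and z :: complex
  assumes "a + d < 0" "a * d - b * c > 0"
    and "(z - of_real a) * (z - of_real d) - of_real b * of_real c = 0"
  shows "Re z < 0"
proof -
  define T where "T = a + d"
  define D where "D = a * d - b * c"
  have e: "z*z - of_real T * z + of_real D = 0" using assms(3) unfolding T_def D_def
    by (simp add: algebra_simps)
  have re: "Re z * Re z - Im z * Im z - T * Re z + D = 0"
    using arg_cong[OF e, of Re] by simp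
  have im: "(2 * Re z - T) * Im z = 0"
    using arg_cong[OF e, of Im] by (simp add: algebra_simps)
  have T0: "T < 0" "D > 0" using assms unfolding T_def D_def by auto
  show ?thesis
  proof (cases "Im z = 0")
    case True
    then have r: "Re z * Re z - T * Re z + D = 0" using re by simp
    show ?thesis
    proof (rule ccontr)
      assume "\<not> Re z < 0"
      then have "Re z \<ge> 0" by simp
      then have "Re z * Re z \<ge> 0" "T * Re z \<le> 0" using T0
        by (auto intro: mult_nonpos_nonneg)
      then show False using r T0 by linarith
    qed
  next
    case False
    then have "2 * Re z = T" using im by simp
    then show ?thesis using T0 by linarith
  qed
qed

lemma stab_pos:
  fixes M :: "real^2^2"
  assumes "M$1$1 + M$2$2 < 0" "M$1$1 * M$2$2 - M$1$2 * M$2$1 > 0" "is_eigenvalue M z"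
  shows "Re z < 0"
  using quad_pos[OF assms(1,2)] assms(3) unfolding eig2 by blast

lemma quad_neg:
  fixes a b c d :: real
  assumes "a * d - b * c \<le> 0"
  shows "\<exists>x::real. x \<ge> 0 \<and> (x - a) * (x - d) - b * c = 0"
proof -
  define T where "T = a + d"
  define D where "D = a * d - b * c"
  define r where "r = sqrt (T^2 - 4 * D)"
  have D0: "D \<le> 0" using assms D_def by simp
  have nn: "T^2 - 4 * D \<ge> 0" using D0 zero_le_power2[of T] by linarith
  have r2: "r^2 = T^2 - 4 * D" unfolding r_def using nn by simp
  have "sqrt (T^2) \<le> r" unfolding r_def using D0 by (intro real_sqrt_le_mono) linarith
  then have rge: "r \<ge> \<bar>T\<bar>" by simp
  define x where "x = (T + r) / 2"
  have "x*x - T*x + D = 0" unfolding x_def using r2 by (simp add: power2_eq_square field_simps)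
  then have "(x - a) * (x - d) - b * c = 0" unfolding T_def D_def by (simp add: algebra_simps)
  moreover have "x \<ge> 0" proof -
    have "T \<le> r" "-T \<le> r" using rge by auto
    then show ?thesis unfolding x_def by simp
  qed
  ultimately show ?thesis by blast
qed

lemma stab_neg:
  fixes M :: "real^2^2"
  assumes "M$1$1 * M$2$2 - M$1$2 * M$2$1 \<le> 0"
  shows "\<exists>z. is_eigenvalue M z \<and> \<not> Re z < 0"
proof -
  obtain x where x: "x \<ge> 0" "(x - M$1$1) * (x - M$2$2) - M$1$2 * M$2$1 = 0"
    using quad_neg[OF assms] by blast
  have "is_eigenvalue M (complex_of_real x)" unfolding eig2
    using arg_cong[OF x(2), of complex_of_real] by simp
  then show ?thesis using x(1) by (intro exI[of _ "complex_of_real x"]) simp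
qed
lemma DT_lin: "DT t beta sig lam psi p q =
   (case t of PP \<Rightarrow> 1 | ZP \<Rightarrow> qbar p q | PZ \<Rightarrow> 1 - qbar p q | ZZ \<Rightarrow> 0) *\<^sub>R A_P beta sig lam psi
   + (1 - (case t of PP \<Rightarrow> 1 | ZP \<Rightarrow> qbar p q | PZ \<Rightarrow> 1 - qbar p q | ZZ \<Rightarrow> 0)) *\<^sub>R A_Z beta sig lam - mat 1"
  by (cases t) (simp_all add: DT_def Let_def)

lemma Mc_entries:
  fixes c beta sig lam psi :: real
  defines "M \<equiv> c *\<^sub>R A_P beta sig lam psi + (1 - c) *\<^sub>R A_Z beta sig lam - mat 1"
  defines "a \<equiv> 1 + lam * sig * psi"
  shows "M$1$1 = c / a + (1 - c) - 1"
    "M$1$2 = c * (sig - beta * sig * psi) / a + (1 - c) * sig"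
    "M$2$1 = c * lam / a + (1 - c) * lam"
    "M$2$2 = c * (beta + lam * sig) / a + (1 - c) * (beta + lam * sig) - 1"
  unfolding M_def a_def A_P_def A_Z_def mat2_def by (simp_all add: mat_def)

lemma Mc_stable:
  fixes c beta sig lam psi :: real
  assumes "0 < beta" "beta < 1" "0 < sig" "0 < lam" "1 < psi"
  defines "M \<equiv> c *\<^sub>R A_P beta sig lam psi + (1 - c) *\<^sub>R A_Z beta sig lam - mat 1"
  defines "a \<equiv> 1 + lam * sig * psi"
  shows "(\<forall>z. is_eigenvalue M z \<longrightarrow> Re z < 0) \<longleftrightarrow> (c / a + (1 - c)) * (1 + lam * sig) - 1 < 0"
proof -
  define s where "s = c / a + (1 - c)"
  have a0: "a > 0" unfolding a_def using assms by (simp add: add_pos_pos)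
  have e11: "M$1$1 = s - 1" unfolding Mc_entries[of c beta sig lam psi, folded M_def a_def] s_def by simp
  have e21: "M$2$1 = lam * s" unfolding Mc_entries[of c beta sig lam psi, folded M_def a_def] s_def
    by (simp add: algebra_simps)
  have e22: "M$2$2 = (beta + lam * sig) * s - 1" unfolding Mc_entries[of c beta sig lam psi, folded M_def a_def] s_def
    by (simp add: algebra_simps add_divide_distrib)
  have e12: "M$1$2 = sig * s - c * beta * sig * psi / a" unfolding Mc_entries[of c beta sig lam psi, folded M_def a_def] s_def
    by (simp add: algebra_simps diff_divide_distrib)
  have key: "lam * (c * beta * sig * psi / a) = beta * (1 - s)"
  proof -
    have "lam * sig * psi = a - 1" unfolding a_def by simp
    have "lam * (c * beta * sig * psi / a) = c * beta * (lam * sig * psi) / a" by (simp add: algebra_simps)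
    also have "... = c * beta * (a - 1) / a" using \<open>lam * sig * psi = a - 1\<close> by simp
    finally have "lam * (c * beta * sig * psi / a) = c * beta * (a - 1) / a" .
    also have "... = beta * (1 - s)" unfolding s_def using a0 by (simp add: field_simps)
    finally show ?thesis .
  qed
  have det: "M$1$1 * M$2$2 - M$1$2 * M$2$1 = 1 - s * (1 + lam * sig)"
  proof -
    have "M$1$2 * M$2$1 = lam * sig * s * s - s * (lam * (c * beta * sig * psi / a))"
      unfolding e12 e21 by (simp add: algebra_simps)
    also have "... = lam * sig * s * s - s * beta * (1 - s)" unfolding key by simp
    finally show ?thesis unfolding e11 e22 by (simp add: algebra_simps)
  qed
  have tr: "M$1$1 + M$2$2 = s * (1 + beta + lam * sig) - 2"
    unfolding Mc_entries[of c beta sig lam psi, folded M_def a_def] s_def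
    by (simp add: algebra_simps add_divide_distrib)
  show ?thesis
  proof
    assume "\<forall>z. is_eigenvalue M z \<longrightarrow> Re z < 0"
    then have "\<not> (M$1$1 * M$2$2 - M$1$2 * M$2$1 \<le> 0)" using stab_neg[of M] by blast
    then show "(c / a + (1 - c)) * (1 + lam * sig) - 1 < 0" using det s_def by simp
  next
    assume h: "(c / a + (1 - c)) * (1 + lam * sig) - 1 < 0"
    then have h': "s * (1 + lam * sig) < 1" using s_def by simp
    have "s < 1"
    proof (rule ccontr)
      assume "\<not> s < 1"
      then have "s * (1 + lam * sig) \<ge> 1 * 1" using assms
        by (intro mult_mono) (auto intro: add_nonneg_nonneg mult_nonneg_nonneg)
      then show False using h' by simp
    qed
    have "s * beta < 1"
    proof (cases "s \<le> 0")
      case True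
      then have "s * beta \<le> 0" using assms(1) by (simp add: mult_nonpos_nonneg)
      then show ?thesis by simp
    next
      case False then have "s * beta < 1 * 1" using \<open>s < 1\<close> assms by (intro mult_strict_mono) auto
      then show ?thesis by simp
    qed
    then have "M$1$1 + M$2$2 < 0" using tr h' by (simp add: algebra_simps)
    moreover have "M$1$1 * M$2$2 - M$1$2 * M$2$1 > 0" using det h' by simp
    ultimately show "\<forall>z. is_eigenvalue M z \<longrightarrow> Re z < 0" using stab_pos by blast
  qed
qed

context
  fixes beta sig lam mu psi p q :: real
  assumes prm: "0 < beta" "beta < 1" "0 < sig" "0 < lam" "0 < mu" "1 < psi"
    "0 < p" "p \<le> 1" "0 < q" "q \<le> 1" "\<not> (p = 1 \<and> q = 1)"
begin

definition "ww = qbar p q"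
definition "aa = 1 + lam * sig * psi"
definition "cs = - mu / psi - lam * sig * mu"
definition "gg c = (if c \<le> cs then c + lam * sig * mu else c / aa)"
definition "uu c = (if c \<le> cs then 1 else 1 / aa)"
definition "cc e P = (1 + lam * sig) * P + lam * e"
definition "FF e1 e2 P = (1 - ww) * gg (cc e1 P) + ww * gg (cc e2 P) - P"
definition "sg e1 e2 P = (1 + lam * sig) * ((1 - ww) * uu (cc e1 P) + ww * uu (cc e2 P)) - 1"
definition "Yof e P = ((gg (cc e P) - beta * P) / lam, gg (cc e P))"

lemma ww_bounds: "0 \<le> ww" "ww \<le> 1"
proof -
  have d: "2 - p - q > 0" using prm by linarith
  show "0 \<le> ww" unfolding ww_def qbar_def using prm d by simp
  show "ww \<le> 1" unfolding ww_def qbar_def using prm d by (simp add: divide_le_eq_1)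
qed

lemma k_pos: "lam * sig > 0" using prm by simp
lemma aa_gt: "aa > 1 + lam * sig"
proof -
  have "lam * sig * 1 < lam * sig * psi" using prm k_pos by (intro mult_strict_left_mono) auto
  then show ?thesis unfolding aa_def by simp
qed
lemma aa_pos: "aa > 0" using aa_gt k_pos by linarith
lemma cs_neg: "cs < 0"
proof -
  have "mu / psi > 0" "lam * sig * mu > 0" using prm k_pos by auto
  then show ?thesis unfolding cs_def by linarith
qed

lemma cs_eq: "cs = - mu * aa / psi" unfolding cs_def aa_def using prm by (simp add: field_simps)

lemma le_cs_iff: "c \<le> cs \<longleftrightarrow> c + lam * sig * mu \<le> c / aa"
proof -
  have "c + lam * sig * mu \<le> c / aa \<longleftrightarrow> aa * c + aa * (lam * sig * mu) \<le> c"
    using aa_pos by (simp add: field_simps)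
  also have "... \<longleftrightarrow> (lam * sig) * (psi * c) \<le> (lam * sig) * (- mu * aa)"
    unfolding aa_def by (simp add: algebra_simps) arith
  also have "... \<longleftrightarrow> psi * c \<le> - mu * aa" using k_pos by (rule mult_le_cancel_left_pos)
  also have "... \<longleftrightarrow> c \<le> - mu * aa / psi" using prm by (simp add: field_simps)
  also have "- mu * aa / psi = cs" unfolding cs_def aa_def using prm by (simp add: field_simps)
  finally show ?thesis by simp
qed

lemma gg_min: "gg c = min (c + lam * sig * mu) (c / aa)"
  unfolding gg_def using le_cs_iff[of c] by auto

lemma gg_char: "gg c + lam * sig * max (psi * gg c) (- mu) = c" "psi * gg c \<le> - mu \<longleftrightarrow> c \<le> cs"
proof -
  have A: "psi * x \<le> - mu \<longleftrightarrow> x \<le> - mu / psi" for x using prm by (simp add: field_simps)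
  show "psi * gg c \<le> - mu \<longleftrightarrow> c \<le> cs"
  proof (cases "c \<le> cs")
    case True
    then show ?thesis unfolding gg_def A cs_def by simp
  next
    case False
    then have "c / aa > cs / aa" using aa_pos by (simp add: divide_strict_right_mono)
    moreover have "cs / aa = - mu / psi" unfolding cs_eq using aa_pos by simp
    ultimately show ?thesis unfolding gg_def A using False by simp
  qed
  then show "gg c + lam * sig * max (psi * gg c) (- mu) = c"
  proof (cases "c \<le> cs")
    case True
    then show ?thesis using \<open>psi * gg c \<le> - mu \<longleftrightarrow> c \<le> cs\<close> unfolding gg_def by simp
  next
    case False
    then have "max (psi * gg c) (- mu) = psi * (c / aa)" using \<open>psi * gg c \<le> - mu \<longleftrightarrow> c \<le> cs\<close>
      unfolding gg_def by simp
    then show ?thesis using False aa_pos unfolding gg_def aa_def by (simp add: field_simps)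
  qed
qed

lemma gg_unique: assumes "x + lam * sig * max (psi * x) (- mu) = c" shows "x = gg c"
proof -
  have mono: "y < z \<Longrightarrow> y + lam * sig * max (psi * y) (- mu) < z + lam * sig * max (psi * z) (- mu)" for y z
  proof -
    assume "y < z"
    then have "psi * y \<le> psi * z" using prm by simp
    then have "max (psi * y) (- mu) \<le> max (psi * z) (- mu)" by simp
    then have "lam * sig * max (psi * y) (- mu) \<le> lam * sig * max (psi * z) (- mu)"
      using k_pos by (intro mult_left_mono) auto
    then show ?thesis using \<open>y < z\<close> by simp
  qed
  show ?thesis
  proof (rule ccontr)
    assume "x \<noteq> gg c"
    then consider "x < gg c" | "gg c < x" by linarith
    then show False using mono[of x "gg c"] mono[of "gg c" x] gg_char(1)[of c] assms by cases auto
  qed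
qed

lemma gg_super: "gg x \<le> gg y + uu y * (x - y)"
proof (cases "y \<le> cs")
  case True
  then have "gg y + uu y * (x - y) = x + lam * sig * mu" unfolding gg_def uu_def by simp
  then show ?thesis unfolding gg_min by simp
next
  case False
  then have "gg y + uu y * (x - y) = x / aa" unfolding gg_def uu_def by (simp add: diff_divide_distrib)
  then show ?thesis unfolding gg_min by simp
qed

lemma gg_le: "gg c \<le> c / aa" unfolding gg_min by simp

lemma gg_nonneg: "0 \<le> c \<Longrightarrow> 0 \<le> gg c"
  unfolding gg_def using cs_neg aa_pos by auto

lemma gg_strict: "x < y \<Longrightarrow> gg x < gg y"
proof -
  assume "x < y"
  then have "x / aa < y / aa" using aa_pos by (simp add: divide_strict_right_mono)
  then show ?thesis unfolding gg_min using \<open>x < y\<close> by (auto simp: min_less_iff_disj min_less_iff_conj)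
qed

lemma FF_super: "FF e1 e2 x \<le> FF e1 e2 y + sg e1 e2 y * (x - y)"
proof -
  have c: "cc e x - cc e y = (1 + lam * sig) * (x - y)" for e unfolding cc_def by (simp add: algebra_simps)
  have s1: "(1 - ww) * gg (cc e1 x) \<le> (1 - ww) * (gg (cc e1 y) + uu (cc e1 y) * (cc e1 x - cc e1 y))"
    using ww_bounds gg_super by (intro mult_left_mono) auto
  have s2: "ww * gg (cc e2 x) \<le> ww * (gg (cc e2 y) + uu (cc e2 y) * (cc e2 x - cc e2 y))"
    using ww_bounds gg_super by (intro mult_left_mono) auto
  show ?thesis using s1 s2 unfolding FF_def sg_def c by (simp add: algebra_simps)
qed

lemma FF_cont: "continuous_on S (FF e1 e2)"
  unfolding FF_def gg_min cc_def by (intro continuous_intros) (use aa_pos in auto)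

lemma FF_le: "FF e1 e2 x \<le> - ((1 - (1 + lam * sig) / aa) * x) + lam * ((1 - ww) * e1 + ww * e2) / aa"
proof -
  have "(1 - ww) * gg (cc e1 x) \<le> (1 - ww) * (cc e1 x / aa)" using ww_bounds gg_le by (intro mult_left_mono) auto
  moreover have "ww * gg (cc e2 x) \<le> ww * (cc e2 x / aa)" using ww_bounds gg_le by (intro mult_left_mono) auto
  ultimately have "FF e1 e2 x \<le> (1 - ww) * (cc e1 x / aa) + ww * (cc e2 x / aa) - x" unfolding FF_def by simp
  also have "... = - ((1 - (1 + lam * sig) / aa) * x) + lam * ((1 - ww) * e1 + ww * e2) / aa"
    unfolding cc_def using aa_pos by (simp add: field_simps)
  finally show ?thesis .
qed


lemma zlb_Yof: "zlb_binds mu psi (snd (Yof e P)) \<longleftrightarrow> cc e P \<le> cs"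
  unfolding zlb_binds_def Yof_def using gg_char(2) by simp

lemma stab_iff: "E_stable beta sig lam mu psi p q (Yof e1 P) (Yof e2 P) \<longleftrightarrow> sg e1 e2 P < 0"
proof -
  have MS: "(\<forall>z. is_eigenvalue (c *\<^sub>R A_P beta sig lam psi + (1 - c) *\<^sub>R A_Z beta sig lam - mat 1) z \<longrightarrow> Re z < 0)
     \<longleftrightarrow> (c / aa + (1 - c)) * (1 + lam * sig) - 1 < 0" for c
    using Mc_stable[of beta sig lam psi c] prm unfolding aa_def by simp
  define c where "c = (if cc e1 P \<le> cs then (if cc e2 P \<le> cs then 0 else ww) else (if cc e2 P \<le> cs then 1 - ww else 1))"
  have DTc: "DT (type_of_RPE mu psi (Yof e1 P) (Yof e2 P)) beta sig lam psi p q
     = c *\<^sub>R A_P beta sig lam psi + (1 - c) *\<^sub>R A_Z beta sig lam - mat 1"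
    unfolding DT_lin type_of_RPE_def zlb_Yof c_def ww_def by simp
  have "E_stable beta sig lam mu psi p q (Yof e1 P) (Yof e2 P) \<longleftrightarrow> (c / aa + (1 - c)) * (1 + lam * sig) - 1 < 0"
    unfolding E_stable_def DTc MS ..
  also have "(c / aa + (1 - c)) * (1 + lam * sig) - 1 = sg e1 e2 P"
    unfolding c_def sg_def uu_def
    using aa_pos by (cases "cc e1 P \<le> cs"; cases "cc e2 P \<le> cs") (simp_all add: field_simps)
  finally show ?thesis .
qed

lemma RPE_root:
  assumes "is_RPE beta sig lam mu psi p q e1 e2 Y1 Y2"
  defines "P \<equiv> ww * snd Y2 + (1 - ww) * snd Y1"
  shows "FF e1 e2 P = 0" "Y1 = Yof e1 P" "Y2 = Yof e2 P"
proof -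
  obtain x1 pi1 x2 pi2 where Y: "Y1 = (x1, pi1)" "Y2 = (x2, pi2)" by (cases Y1, cases Y2) auto
  define X where "X = ww * x2 + (1 - ww) * x1"
  have P: "P = ww * pi2 + (1 - ww) * pi1" unfolding P_def Y by simp
  have E: "x1 = X - sig * (max (psi * pi1) (- mu) - P) + e1" "pi1 = lam * x1 + beta * P"
     "x2 = X - sig * (max (psi * pi2) (- mu) - P) + e2" "pi2 = lam * x2 + beta * P"
    using assms(1) unfolding is_RPE_def Let_def Y ww_def[symmetric] by (auto simp: X_def P)
  have h: "ww * pi2 + (1-ww)*pi1 = ww * (lam * x2 + beta * P) + (1 - ww) * (lam * x1 + beta * P)"
    by (simp only: E(2)[symmetric] E(4)[symmetric])
  have avg: "P = lam * X + beta * P" using trans[OF P h] unfolding X_def by (simp add: algebra_simps)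
  have lX: "lam * X = P - beta * P" using avg by linarith
  have gen: "pi + lam * sig * i = cc e P" if "x = X - sig * (i - P) + e" "pi = lam * x + beta * P" for x pi i e
  proof -
    have "pi = lam * (X - sig * (i - P) + e) + beta * P" using that by simp
    also have "... = lam * X - lam * sig * i + lam * sig * P + lam * e + beta * P" by (simp add: algebra_simps)
    finally have "pi = lam * X - lam * sig * i + lam * sig * P + lam * e + beta * P" .
    then show ?thesis unfolding cc_def distrib_right using lX by linarith
  qed
  have g1: "pi1 + lam * sig * max (psi * pi1) (- mu) = cc e1 P" using gen[OF E(1,2)] .
  have g2: "pi2 + lam * sig * max (psi * pi2) (- mu) = cc e2 P" using gen[OF E(3,4)] .
  have p1: "pi1 = gg (cc e1 P)" using gg_unique[OF g1] .
  have p2: "pi2 = gg (cc e2 P)" using gg_unique[OF g2] .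
  have x1: "x1 = (pi1 - beta * P) / lam" using E(2) prm by (simp add: field_simps)
  have x2: "x2 = (pi2 - beta * P) / lam" using E(4) prm by (simp add: field_simps)
  show "FF e1 e2 P = 0" unfolding FF_def using P p1 p2 by simp
  show "Y1 = Yof e1 P" unfolding Y Yof_def using x1 p1 by simp
  show "Y2 = Yof e2 P" unfolding Y Yof_def using x2 p2 by simp
qed

lemma root_RPE:
  assumes "FF e1 e2 P = 0"
  shows "is_RPE beta sig lam mu psi p q e1 e2 (Yof e1 P) (Yof e2 P)"
proof -
  define g1 where "g1 = gg (cc e1 P)"
  define g2 where "g2 = gg (cc e2 P)"
  have pb: "ww * g2 + (1 - ww) * g1 = P" using assms unfolding FF_def g1_def g2_def by simp
  have xb: "ww * ((g2 - beta * P) / lam) + (1 - ww) * ((g1 - beta * P) / lam) = (P - beta * P) / lam"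
    using pb prm by (simp add: field_simps)
  have c1: "g1 + lam * sig * max (psi * g1) (- mu) = (1 + lam * sig) * P + lam * e1"
    using gg_char(1)[of "cc e1 P"] unfolding g1_def cc_def .
  have c2: "g2 + lam * sig * max (psi * g2) (- mu) = (1 + lam * sig) * P + lam * e2"
    using gg_char(1)[of "cc e2 P"] unfolding g2_def cc_def .
  have l: "(g - beta * P) / lam = (P - beta * P) / lam - sig * (i - P) + e"
     "g = lam * ((P - beta * P) / lam - sig * (i - P) + e) + beta * P"
    if "g + lam * sig * i = (1 + lam * sig) * P + lam * e" for g e i
  proof -
    have "g = (1 + lam * sig) * P + lam * e - lam * sig * i" using that by linarith
    then have "(g - beta * P) / lam = ((1 + lam * sig) * P + lam * e - lam * sig * i - beta * P) / lam" by simp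
    also have "... = (P - beta * P) / lam - sig * (i - P) + e" using prm by (simp add: field_simps)
    finally show "(g - beta * P) / lam = (P - beta * P) / lam - sig * (i - P) + e" .
    then have "lam * ((g - beta * P) / lam) = lam * ((P - beta * P) / lam - sig * (i - P) + e)" by simp
    then show "g = lam * ((P - beta * P) / lam - sig * (i - P) + e) + beta * P"
      using prm by simp
  qed
  have m: "g = lam * ((g - beta * P) / lam) + beta * P" for g using prm by (simp add: field_simps)
  show ?thesis
    unfolding is_RPE_def Let_def Yof_def ww_def[symmetric] fst_conv snd_conv g1_def[symmetric] g2_def[symmetric] xb pb
    using l[OF c1] l[OF c2] m by simp
qed


lemma stable_root_unique:
  assumes "FF e1 e2 P = 0" "FF e1 e2 Q = 0" "sg e1 e2 P < 0" "sg e1 e2 Q < 0"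
  shows "P = Q"
proof (rule ccontr)
  have C: "False" if "FF e1 e2 x = 0" "FF e1 e2 y = 0" "sg e1 e2 x < 0" "x < y" for x y
  proof -
    have "FF e1 e2 y \<le> FF e1 e2 x + sg e1 e2 x * (y - x)" by (rule FF_super)
    moreover have "sg e1 e2 x * (y - x) < 0" using that by (simp add: mult_neg_pos)
    ultimately show False using that by simp
  qed
  assume "P \<noteq> Q"
  then consider "P < Q" | "Q < P" by linarith
  then show False using C[of P Q] C[of Q P] assms by cases auto
qed

lemma RPE_decomp:
  assumes "is_RPE beta sig lam mu psi p q e1 e2 Y1 Y2"
  obtains P where "FF e1 e2 P = 0" "Y1 = Yof e1 P" "Y2 = Yof e2 P"
  using RPE_root[OF assms] by blast

lemma main:
  fixes e1 e2 :: real and eps_bar :: ereal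
  assumes "e2 \<ge> 0"
    and threshold: "\<forall>e. (\<exists>Y1 Y2. is_RPE beta sig lam mu psi p q e e2 Y1 Y2) \<longleftrightarrow> ereal e \<ge> eps_bar"
    and e1gt: "ereal e1 > eps_bar"
  shows "(\<exists>!Y. is_RPE beta sig lam mu psi p q e1 e2 (fst Y) (snd Y) \<and>
               E_stable beta sig lam mu psi p q (fst Y) (snd Y))
       \<and> (\<forall>Y1 Y2. is_RPE beta sig lam mu psi p q e1 e2 Y1 Y2 \<and>
               E_stable beta sig lam mu psi p q Y1 Y2 \<longrightarrow>
               type_of_RPE mu psi Y1 Y2 = PP \<or> type_of_RPE mu psi Y1 Y2 = ZP)"
proof -
  have k0: "lam * sig > 0" by (rule k_pos)
  obtain P0 where P0: "FF e1 e2 P0 > 0"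
  proof (cases "ww = 1")
    case True
    define h where "h = cs / 2"
    have h0: "h < 0" unfolding h_def using cs_neg by simp
    define P0 where "P0 = h / (1 + lam * sig)"
    have cc: "cc e2 P0 = h + lam * e2" unfolding cc_def P0_def using k0 by simp
    have "lam * e2 \<ge> 0" using assms(1) prm by simp
    then have "cc e2 P0 > cs" unfolding cc h_def using cs_neg by linarith
    then have g: "gg (cc e2 P0) = (h + lam * e2) / aa" unfolding gg_def cc by simp
    have "h / aa \<le> (h + lam * e2) / aa" using aa_pos \<open>lam * e2 \<ge> 0\<close> by (simp add: divide_right_mono)
    moreover have "h / (1 + lam * sig) < h / aa"
      using aa_gt h0 k0 by (intro divide_strict_left_mono_neg) (auto intro: mult_pos_pos)
    moreover have "FF e1 e2 P0 = (h + lam * e2) / aa - P0" unfolding FF_def True g by simp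
    ultimately have "FF e1 e2 P0 > 0" unfolding P0_def by simp
    then show ?thesis using that by blast
  next
    case False
    then have w1: "ww < 1" using ww_bounds by simp
    obtain e' where e': "eps_bar < ereal e'" "ereal e' < ereal e1" using ereal_dense2[OF e1gt] by blast
    then have "eps_bar \<le> ereal e'" by simp
    then have "\<exists>Y1 Y2. is_RPE beta sig lam mu psi p q e' e2 Y1 Y2" using threshold by blast
    then obtain Y1 Y2 where "is_RPE beta sig lam mu psi p q e' e2 Y1 Y2" by blast
    then obtain P' where F0: "FF e' e2 P' = 0" by (rule RPE_decomp)
    have "e' < e1" using e' by simp
    then have "cc e' P' < cc e1 P'" unfolding cc_def using prm by simp
    then have "gg (cc e' P') < gg (cc e1 P')" by (rule gg_strict)
    then have "(1 - ww) * gg (cc e' P') < (1 - ww) * gg (cc e1 P')" using w1 by simp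
    then have "FF e1 e2 P' > 0" using F0 unfolding FF_def by simp
    then show ?thesis using that by blast
  qed
  define r where "r = 1 - (1 + lam * sig) / aa"
  have r0: "r > 0" unfolding r_def using aa_gt aa_pos by simp
  define C where "C = lam * ((1 - ww) * e1 + ww * e2) / aa"
  define G0 where "G0 = - (r * P0) + C"
  define B where "B = P0 + 1 + \<bar>G0\<bar> / r"
  have "\<bar>G0\<bar> / r \<ge> 0" using r0 by simp
  then have PB: "P0 \<le> B" unfolding B_def by simp
  have "FF e1 e2 B \<le> - (r * B) + C" using FF_le[of e1 e2 B] unfolding r_def C_def by simp
  also have "- (r * B) + C = G0 - r - \<bar>G0\<bar>" unfolding B_def G0_def using r0 by (simp add: algebra_simps)
  also have "... < 0" using r0 by simp
  finally have FB: "FF e1 e2 B < 0" .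
  obtain Q where Q: "P0 \<le> Q" "Q \<le> B" "FF e1 e2 Q = 0"
    using IVT2'[of "FF e1 e2" B 0 P0] FB P0 PB FF_cont by force
  have "Q \<noteq> P0" using Q P0 by auto
  with Q have PQ: "P0 < Q" by simp
  have sgQ: "sg e1 e2 Q < 0"
  proof (rule ccontr)
    assume "\<not> sg e1 e2 Q < 0"
    then have "sg e1 e2 Q * (P0 - Q) \<le> 0" using PQ by (simp add: mult_nonneg_nonpos)
    moreover have "FF e1 e2 P0 \<le> FF e1 e2 Q + sg e1 e2 Q * (P0 - Q)" by (rule FF_super)
    ultimately show False using P0 Q(3) by simp
  qed
  have ex: "is_RPE beta sig lam mu psi p q e1 e2 (Yof e1 Q) (Yof e2 Q) \<and> E_stable beta sig lam mu psi p q (Yof e1 Q) (Yof e2 Q)"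
    using root_RPE[OF Q(3)] stab_iff sgQ by blast
  have char: "\<exists>P. FF e1 e2 P = 0 \<and> sg e1 e2 P < 0 \<and> Y1 = Yof e1 P \<and> Y2 = Yof e2 P"
    if R: "is_RPE beta sig lam mu psi p q e1 e2 Y1 Y2" and S: "E_stable beta sig lam mu psi p q Y1 Y2" for Y1 Y2
  proof -
    obtain P where P: "FF e1 e2 P = 0" "Y1 = Yof e1 P" "Y2 = Yof e2 P" using RPE_decomp[OF R] by blast
    then have "sg e1 e2 P < 0" using S stab_iff by simp
    then show ?thesis using P by blast
  qed
  have part1: "\<exists>!Y. is_RPE beta sig lam mu psi p q e1 e2 (fst Y) (snd Y) \<and>
               E_stable beta sig lam mu psi p q (fst Y) (snd Y)"
  proof (rule ex1I[of _ "(Yof e1 Q, Yof e2 Q)"])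
    show "is_RPE beta sig lam mu psi p q e1 e2 (fst (Yof e1 Q, Yof e2 Q)) (snd (Yof e1 Q, Yof e2 Q)) \<and>
          E_stable beta sig lam mu psi p q (fst (Yof e1 Q, Yof e2 Q)) (snd (Yof e1 Q, Yof e2 Q))"
      using ex by simp
  next
    fix Y assume "is_RPE beta sig lam mu psi p q e1 e2 (fst Y) (snd Y) \<and> E_stable beta sig lam mu psi p q (fst Y) (snd Y)"
    then obtain P where P: "FF e1 e2 P = 0" "sg e1 e2 P < 0" "fst Y = Yof e1 P" "snd Y = Yof e2 P"
      using char by blast
    have "P = Q" using stable_root_unique[OF P(1) Q(3) P(2) sgQ] .
    then show "Y = (Yof e1 Q, Yof e2 Q)" using P(3,4) by (metis prod.collapse)
  qed
  have part2: "type_of_RPE mu psi Y1 Y2 = PP \<or> type_of_RPE mu psi Y1 Y2 = ZP"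
    if RS: "is_RPE beta sig lam mu psi p q e1 e2 Y1 Y2 \<and> E_stable beta sig lam mu psi p q Y1 Y2" for Y1 Y2
  proof -
    obtain P where P: "FF e1 e2 P = 0" "sg e1 e2 P < 0" "Y1 = Yof e1 P" "Y2 = Yof e2 P"
      using char RS by blast
    have notZZ: "\<not> (cc e1 P \<le> cs \<and> cc e2 P \<le> cs)"
    proof
      assume "cc e1 P \<le> cs \<and> cc e2 P \<le> cs"
      then have "sg e1 e2 P = lam * sig" unfolding sg_def uu_def by (simp add: algebra_simps)
      then show False using P(2) k0 by simp
    qed
    have notPZ: "\<not> (\<not> cc e1 P \<le> cs \<and> cc e2 P \<le> cs)"
    proof
      assume h: "\<not> cc e1 P \<le> cs \<and> cc e2 P \<le> cs"
      then have "lam * e2 < lam * e1" unfolding cc_def by simp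
      then have "e2 < e1" using prm by simp
      then have e1p: "e1 \<ge> 0" using assms(1) by simp
      have "lam * e2 \<ge> 0" using assms(1) prm by simp
      then have "(1 + lam * sig) * P < 0" using h cs_neg unfolding cc_def by linarith
      then have Pn: "P < 0" using k0 by (simp add: mult_less_0_iff)
      have "0 \<le> gg (cc e1 0)" "0 \<le> gg (cc e2 0)" using e1p assms(1) prm by (auto intro!: gg_nonneg simp: cc_def)
      then have F0: "FF e1 e2 0 \<ge> 0" unfolding FF_def using ww_bounds by simp
      have "FF e1 e2 0 \<le> FF e1 e2 P + sg e1 e2 P * (0 - P)" by (rule FF_super)
      moreover have "sg e1 e2 P * (0 - P) < 0" using P(2) Pn by (simp add: mult_neg_neg)
      ultimately show False using F0 P(1) by simp
    qed
    show ?thesis unfolding type_of_RPE_def P(3,4) zlb_Yof using notZZ notPZ by auto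
  qed
  show ?thesis using part1 part2 by blast
qed

end

theorem proposition8:
  fixes beta sig lam mu psi p q e1 e2 :: real and eps_bar :: ereal
  assumes "0 < beta" "beta < 1" "0 < sig" "0 < lam" "0 < mu" "1 < psi"
    and "0 < p" "p \<le> 1" "0 < q" "q \<le> 1" "\<not> (p = 1 \<and> q = 1)"
    and "e2 \<ge> 0"
    and "eps_bar \<noteq> \<infinity>"
    and threshold: "\<forall>e. (\<exists>Y1 Y2. is_RPE beta sig lam mu psi p q e e2 Y1 Y2) \<longleftrightarrow> ereal e \<ge> eps_bar"
    and "ereal e1 > eps_bar"
  shows "(\<exists>!Y. is_RPE beta sig lam mu psi p q e1 e2 (fst Y) (snd Y) \<and>
               E_stable beta sig lam mu psi p q (fst Y) (snd Y))
       \<and> (\<forall>Y1 Y2. is_RPE beta sig lam mu psi p q e1 e2 Y1 Y2 \<and>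
               E_stable beta sig lam mu psi p q Y1 Y2 \<longrightarrow>
               type_of_RPE mu psi Y1 Y2 = PP \<or> type_of_RPE mu psi Y1 Y2 = ZP)"
  by (rule main[OF assms(1-11) assms(12) threshold assms(15)])

end
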